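(* Let $\mathcal T$ be a mesh of $\Omega$ as described in the context, with degrees $\mathbf p$. Then $\mathcal T$ is abstractly analysis-suitable (AAS) if and only if $\mathcal T$ is strongly dual-compatible (SDC).
   Context: Fix an integer $d\ge 2$, integers $N_1,\dots,N_d\ge 1$, polynomial degrees $\mathbf p=(p_1,\dots,p_d)\in\mathbb N^d$, and put $q_k=\lfloor (p_k+1)/2\rfloor$. Let $\Omega=\prod_{k=1}^d(0,N_k)$ and let $\mathrm{AR}=\prod_{k=1}^d[q_k,N_k-q_k]$ be the active region. A mesh $\mathcal T$ is a finite family of pairwise disjoint sets $E=E_1\times\cdots\times E_d$ (entities) whose union is $\overline\Omega$, where each $E_k$ is either a singleton $\{n\}$ with $n\in\{0,\dots,N_k\}$ or an open interval $(a,b)$ with integers $0\le a<b\le N_k$; entities all of whose components are open intervals are cells. Only meshes arising as follows are considered: start from a tensor-product mesh given by integer grids $0=g^k_0<\dots<g^k_{M_k}=N_k$ (entities: all products of grid points $\{g^k_r\}$ and open grid intervals $(g^k_r,g^k_{r+1})$), each grid containing $0,\dots,q_k$ and $N_k-q_k,\dots,N_k$, and apply finitely many subdivision steps. A subdivision step $\mathrm{subdiv}(\mathcal T,Q,j)$, for a cell $Q\subset\mathrm{AR}$ and direction $j$ such that $m=\frac12(\inf Q_j+\sup Q_j)$ is an integer, is: let $D=\overline Q$; for every $\ell\neq j$, if $\min D_\ell=q_\ell$ replace $D_\ell$ by $D_\ell\cup[0,q_\ell]$, and if $\max D_\ell=N_\ell-q_\ell$ replace $D_\ell$ by $D_\ell\cup[N_\ell-q_\ell,N_\ell]$;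 then replace every entity $E\subset D$ with $E_j=Q_j$ by the three entities obtained from $E$ by replacing its $j$-th component by $(\inf Q_j,m)$, $\{m\}$, $(m,\sup Q_j)$ respectively. For a product set $E$, a direction $j$ and an integer $n$, $P_{j,n}(E)$ is $E$ with its $j$-th component replaced by $\{n\}$. The slice is $S_j(n)=\{x\in\overline\Omega: x_j=n\}$. The $j$-orthogonal skeleton is the closed set $\mathrm{Sk}_j=\bigcup_{Q\text{ cell}}\{x\in\overline Q: x_j\in\{\inf Q_j,\sup Q_j\}\}$. Anchors: let $\kappa=\{\ell: p_\ell\text{ odd}\}$. For a cell $Q$ consider the sets $A=A_1\times\dots\times A_d$ with $A_\ell=\{n_\ell\}$, $n_\ell\in\{\inf Q_\ell,\sup Q_\ell\}$, for $\ell\in\kappa$ and $A_\ell=Q_\ell$ for $\ell\notin\kappa$; the set $\mathcal A$ of anchors consists of all such sets (over all cells) that are contained in $\mathrm{AR}$. For a product set $E$ and direction $j$, the global knot vector $\Xi^j_E$ is the increasing sequence of all integers $n$ with $P_{j,n}(E)\subseteq \mathrm{Sk}_j$. For an anchor $A$, the local knot vector $v^j_A=(\ell_0,\dots,\ell_{p_j+1})$ consists of $p_j+2$ consecutive entries of $\Xi^j_A$ with $\ell_{\lfloor (p_j+1)/2\rfloor}=\inf A_j$. Knot vectors are ordered lists; "$n\in v$" means $n$ is an entry of $v$; $\mathrm{conv}\,v$ is the closed interval from the first to the last entry. The index support of the T-spline $B_A$ of $A$ is $\mathrm{supp}_\Omega B_A=\prod_{k=1}^d\mathrm{conv}\, v^k_A$.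 Abstract T-junction extensions: for $j\in\{1,\dots,d\}$, $n\in\{0,\dots,N_j\}$, $\mathrm{ATJ}_j(n)=S_j(n)\cap\bigcup_{A\in\mathcal A,\, n\in\Xi^j_A}\mathrm{supp}_\Omega B_A\cap\bigcup_{A\in\mathcal A,\, n\notin\Xi^j_A}\mathrm{supp}_\Omega B_A$. The mesh is AAS if $\mathrm{ATJ}_i(n)\cap\mathrm{ATJ}_j(m)=\emptyset$ for all $i\ne j$ and all $n\in\{0,\dots,N_i\}$, $m\in\{0,\dots,N_j\}$. Overlap: two non-decreasing finite sequences $\Xi^{(1)}=(\xi^{(1)}_1,\dots,\xi^{(1)}_{n_1})$, $\Xi^{(2)}=(\xi^{(2)}_1,\dots,\xi^{(2)}_{n_2})$ overlap, written $\Xi^{(1)}\bowtie\Xi^{(2)}$, if there is a non-decreasing sequence $(\xi_1,\dots,\xi_n)$ with $n\ge\max(n_1,n_2)$ and integers $k^{(1)},k^{(2)}\ge 0$ with $\xi^{(1)}_r=\xi_{r+k^{(1)}}$ for $r=1,\dots,n_1$ and $\xi^{(2)}_r=\xi_{r+k^{(2)}}$ for $r=1,\dots,n_2$. The mesh is SDC if for any two distinct anchors $A^{(1)}\ne A^{(2)}$, either $\mathrm{supp}_\Omega B_{A^{(1)}}\cap\mathrm{supp}_\Omega B_{A^{(2)}}=\emptyset$ or $v^k_{A^{(1)}}\bowtie v^k_{A^{(2)}}$ holds for at least $d-1$ directions $k$. *)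

theory Defs
  imports "HOL-Analysis.Analysis"
begin

text \<open>Directions are indexed 0..d-1.  Points of R^d are functions nat => real
  that vanish outside {0..<d}.  Entities (product sets) are described by
  descriptors: one component per direction, either a singleton or an open
  interval with integer end points; components with index >= d are Pt 0.\<close>

datatype comp = Pt int | Iv int int

fun comp_set :: "comp \<Rightarrow> real set" where
  "comp_set (Pt n) = {of_int n}"
| "comp_set (Iv a b) = {of_int a<..<of_int b}"

fun lo :: "comp \<Rightarrow> int" where
  "lo (Pt n) = n"
| "lo (Iv a b) = a"

fun hi :: "comp \<Rightarrow> int" where
  "hi (Pt n) = n"
| "hi (Iv a b) = b"

type_synonym ent = "nat \<Rightarrow> comp"

definition points :: "nat \<Rightarrow> (nat \<Rightarrow> real) set" where
  "points d = {x. \<forall>k\<ge>d. x k = 0}"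

definition ent_set :: "nat \<Rightarrow> ent \<Rightarrow> (nat \<Rightarrow> real) set" where
  "ent_set d E = {x \<in> points d. \<forall>k<d. x k \<in> comp_set (E k)}"

definition ent_closure :: "nat \<Rightarrow> ent \<Rightarrow> (nat \<Rightarrow> real) set" where
  "ent_closure d E = {x \<in> points d. \<forall>k<d. of_int (lo (E k)) \<le> x k \<and> x k \<le> of_int (hi (E k))}"

definition is_cell :: "nat \<Rightarrow> ent \<Rightarrow> bool" where
  "is_cell d E \<longleftrightarrow> (\<forall>k<d. \<exists>a b. E k = Iv a b)"

definition qq :: "(nat \<Rightarrow> nat) \<Rightarrow> nat \<Rightarrow> int" where
  "qq p k = int ((p k + 1) div 2)"

definition Omega_bar :: "nat \<Rightarrow> (nat \<Rightarrow> int) \<Rightarrow> (nat \<Rightarrow> real) set" where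
  "Omega_bar d N = {x \<in> points d. \<forall>k<d. 0 \<le> x k \<and> x k \<le> of_int (N k)}"

definition AR :: "nat \<Rightarrow> (nat \<Rightarrow> int) \<Rightarrow> (nat \<Rightarrow> nat) \<Rightarrow> (nat \<Rightarrow> real) set" where
  "AR d N p = {x \<in> points d. \<forall>k<d. of_int (qq p k) \<le> x k \<and> x k \<le> of_int (N k - qq p k)}"

definition grid_comp :: "int set \<Rightarrow> comp \<Rightarrow> bool" where
  "grid_comp G c \<longleftrightarrow> (\<exists>g\<in>G. c = Pt g) \<or>
     (\<exists>a\<in>G. \<exists>b\<in>G. a < b \<and> (\<forall>g\<in>G. \<not> (a < g \<and> g < b)) \<and> c = Iv a b)"

definition valid_grid :: "int \<Rightarrow> int \<Rightarrow> int set \<Rightarrow> bool" where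
  "valid_grid Nk qk G \<longleftrightarrow> G \<subseteq> {0..Nk} \<and> {0..qk} \<subseteq> G \<and> {Nk - qk..Nk} \<subseteq> G"

definition tp_mesh :: "nat \<Rightarrow> (nat \<Rightarrow> int set) \<Rightarrow> ent set" where
  "tp_mesh d G = {E. (\<forall>k<d. grid_comp (G k) (E k)) \<and> (\<forall>k\<ge>d. E k = Pt 0)}"

definition D_lo :: "(nat \<Rightarrow> nat) \<Rightarrow> ent \<Rightarrow> nat \<Rightarrow> nat \<Rightarrow> int" where
  "D_lo p Q j l = (if l \<noteq> j \<and> lo (Q l) = qq p l then 0 else lo (Q l))"

definition D_hi :: "(nat \<Rightarrow> int) \<Rightarrow> (nat \<Rightarrow> nat) \<Rightarrow> ent \<Rightarrow> nat \<Rightarrow> nat \<Rightarrow> int" where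
  "D_hi N p Q j l = (if l \<noteq> j \<and> hi (Q l) = N l - qq p l then N l else hi (Q l))"

definition D_set :: "nat \<Rightarrow> (nat \<Rightarrow> int) \<Rightarrow> (nat \<Rightarrow> nat) \<Rightarrow> ent \<Rightarrow> nat \<Rightarrow> (nat \<Rightarrow> real) set" where
  "D_set d N p Q j = {x \<in> points d. \<forall>l<d. of_int (D_lo p Q j l) \<le> x l \<and> x l \<le> of_int (D_hi N p Q j l)}"

definition subdiv :: "nat \<Rightarrow> (nat \<Rightarrow> int) \<Rightarrow> (nat \<Rightarrow> nat) \<Rightarrow> ent set \<Rightarrow> ent \<Rightarrow> nat \<Rightarrow> ent set" where
  "subdiv d N p T Q j =
     (let a = lo (Q j); b = hi (Q j); m = (a + b) div 2;
          aff = {E \<in> T. ent_set d E \<subseteq> D_set d N p Q j \<and> E j = Q j}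
      in (T - aff) \<union> (\<lambda>E. E(j := Iv a m)) ` aff \<union> (\<lambda>E. E(j := Pt m)) ` aff
           \<union> (\<lambda>E. E(j := Iv m b)) ` aff)"

inductive_set meshes :: "nat \<Rightarrow> (nat \<Rightarrow> int) \<Rightarrow> (nat \<Rightarrow> nat) \<Rightarrow> ent set set"
  for d N p where
  tp: "(\<forall>k<d. valid_grid (N k) (qq p k) (G k)) \<Longrightarrow> tp_mesh d G \<in> meshes d N p"
| step: "T \<in> meshes d N p \<Longrightarrow> Q \<in> T \<Longrightarrow> is_cell d Q \<Longrightarrow> ent_set d Q \<subseteq> AR d N p \<Longrightarrow>
         j < d \<Longrightarrow> even (lo (Q j) + hi (Q j)) \<Longrightarrow> subdiv d N p T Q j \<in> meshes d N p"

definition slice :: "nat \<Rightarrow> (nat \<Rightarrow> int) \<Rightarrow> nat \<Rightarrow> int \<Rightarrow> (nat \<Rightarrow> real) set" where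
  "slice d N j n = {x \<in> Omega_bar d N. x j = of_int n}"

definition skel :: "nat \<Rightarrow> ent set \<Rightarrow> nat \<Rightarrow> (nat \<Rightarrow> real) set" where
  "skel d T j = (\<Union>Q\<in>{Q \<in> T. is_cell d Q}.
      {x \<in> ent_closure d Q. x j \<in> {of_int (lo (Q j)), of_int (hi (Q j))}})"

definition anchors :: "nat \<Rightarrow> (nat \<Rightarrow> int) \<Rightarrow> (nat \<Rightarrow> nat) \<Rightarrow> ent set \<Rightarrow> ent set" where
  "anchors d N p T = {A. \<exists>Q\<in>T. is_cell d Q \<and>
      (\<forall>k. k < d \<and> odd (p k) \<longrightarrow> A k = Pt (lo (Q k)) \<or> A k = Pt (hi (Q k))) \<and>
      (\<forall>k. \<not> (k < d \<and> odd (p k)) \<longrightarrow> A k = Q k) \<and>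
      ent_set d A \<subseteq> AR d N p}"

text \<open>global knot vector, as the set of its entries (it is the increasing enumeration)\<close>
definition gkv :: "nat \<Rightarrow> ent set \<Rightarrow> nat \<Rightarrow> ent \<Rightarrow> int set" where
  "gkv d T j E = {n. ent_set d (E(j := Pt n)) \<subseteq> skel d T j}"

definition is_lkv :: "int set \<Rightarrow> nat \<Rightarrow> nat \<Rightarrow> int \<Rightarrow> int list \<Rightarrow> bool" where
  "is_lkv K pj qj a v \<longleftrightarrow> length v = pj + 2 \<and> sorted_wrt (<) v \<and> set v \<subseteq> K \<and>
     (\<forall>i. i + 1 < length v \<longrightarrow> \<not> (\<exists>n\<in>K. v ! i < n \<and> n < v ! (i + 1))) \<and> v ! qj = a"

definition lkv :: "nat \<Rightarrow> (nat \<Rightarrow> nat) \<Rightarrow> ent set \<Rightarrow> nat \<Rightarrow> ent \<Rightarrow> int list" where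
  "lkv d p T j A = (THE v. is_lkv (gkv d T j A) (p j) ((p j + 1) div 2) (lo (A j)) v)"

definition supp :: "nat \<Rightarrow> (nat \<Rightarrow> nat) \<Rightarrow> ent set \<Rightarrow> ent \<Rightarrow> (nat \<Rightarrow> real) set" where
  "supp d p T A = {x \<in> points d. \<forall>k<d.
      of_int (hd (lkv d p T k A)) \<le> x k \<and> x k \<le> of_int (last (lkv d p T k A))}"

definition ATJ :: "nat \<Rightarrow> (nat \<Rightarrow> int) \<Rightarrow> (nat \<Rightarrow> nat) \<Rightarrow> ent set \<Rightarrow> nat \<Rightarrow> int \<Rightarrow> (nat \<Rightarrow> real) set" where
  "ATJ d N p T j n = slice d N j n
     \<inter> (\<Union>A\<in>{A \<in> anchors d N p T. n \<in> gkv d T j A}. supp d p T A)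
     \<inter> (\<Union>A\<in>{A \<in> anchors d N p T. n \<notin> gkv d T j A}. supp d p T A)"

definition AAS :: "nat \<Rightarrow> (nat \<Rightarrow> int) \<Rightarrow> (nat \<Rightarrow> nat) \<Rightarrow> ent set \<Rightarrow> bool" where
  "AAS d N p T \<longleftrightarrow> (\<forall>i<d. \<forall>j<d. i \<noteq> j \<longrightarrow>
      (\<forall>n\<in>{0..N i}. \<forall>m\<in>{0..N j}. ATJ d N p T i n \<inter> ATJ d N p T j m = {}))"

definition overlap :: "int list \<Rightarrow> int list \<Rightarrow> bool" where
  "overlap s1 s2 \<longleftrightarrow> (\<exists>xs k1 k2. sorted xs \<and> length xs \<ge> max (length s1) (length s2) \<and>
      (\<forall>r<length s1. r + k1 < length xs \<and> s1 ! r = xs ! (r + k1)) \<and>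
      (\<forall>r<length s2. r + k2 < length xs \<and> s2 ! r = xs ! (r + k2)))"

definition SDC :: "nat \<Rightarrow> (nat \<Rightarrow> int) \<Rightarrow> (nat \<Rightarrow> nat) \<Rightarrow> ent set \<Rightarrow> bool" where
  "SDC d N p T \<longleftrightarrow> (\<forall>A1\<in>anchors d N p T. \<forall>A2\<in>anchors d N p T. A1 \<noteq> A2 \<longrightarrow>
      supp d p T A1 \<inter> supp d p T A2 = {} \<or>
      card {k. k < d \<and> overlap (lkv d p T k A1) (lkv d p T k A2)} \<ge> d - 1)"

end

theory Submission
  imports Defs
begin



lemma sw_less_iff:
  fixes xs :: "'a::linorder list"
  assumes "sorted_wrt (<) xs" "i < length xs" "j < length xs"
  shows "xs ! i < xs ! j \<longleftrightarrow> i < j"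
proof
  assume "xs ! i < xs ! j"
  show "i < j"
  proof (rule ccontr)
    assume "\<not> i < j"
    then have "j < i \<or> j = i" by auto
    then show False
    proof
      assume "j < i" then have "xs ! j < xs ! i" using assms sorted_wrt_nth_less by blast
      then show False using \<open>xs ! i < xs ! j\<close> by simp
    next
      assume "j = i" then show False using \<open>xs ! i < xs ! j\<close> by simp
    qed
  qed
next
  assume "i < j" then show "xs ! i < xs ! j" using assms sorted_wrt_nth_less by blast
qed

lemma sw_le_iff:
  fixes xs :: "'a::linorder list"
  assumes "sorted_wrt (<) xs" "i < length xs" "j < length xs"
  shows "xs ! i \<le> xs ! j \<longleftrightarrow> i \<le> j"
  using sw_less_iff[OF assms(1) assms(3) assms(2)] by (meson not_le)

lemma is_lkv_unique:
  assumes v: "is_lkv K pj qj a v" and w: "is_lkv K pj qj a w" and q: "qj < pj + 2"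
  shows "v = w"
proof -
  have lv: "length v = pj + 2" "length w = pj + 2" using v w by (auto simp: is_lkv_def)
  have sv: "sorted_wrt (<) v" "sorted_wrt (<) w" using v w by (auto simp: is_lkv_def)
  have kv: "set v \<subseteq> K" "set w \<subseteq> K" using v w by (auto simp: is_lkv_def)
  have cv: "\<And>i n. i + 1 < pj + 2 \<Longrightarrow> n \<in> K \<Longrightarrow> \<not> (v ! i < n \<and> n < v ! (i + 1))"
    "\<And>i n. i + 1 < pj + 2 \<Longrightarrow> n \<in> K \<Longrightarrow> \<not> (w ! i < n \<and> n < w ! (i + 1))"
    using v w by (auto simp: is_lkv_def)
  have mem: "\<And>i. i < pj + 2 \<Longrightarrow> v ! i \<in> K" "\<And>i. i < pj + 2 \<Longrightarrow> w ! i \<in> K"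
    using kv lv nth_mem by (metis subsetD)+
  have lt: "\<And>i. i + 1 < pj + 2 \<Longrightarrow> v ! i < v ! (i+1)" "\<And>i. i + 1 < pj + 2 \<Longrightarrow> w ! i < w ! (i+1)"
    using sv lv sorted_wrt_nth_less by (metis less_add_one)+
  have up: "v ! (i+1) = w ! (i+1)" if "i + 1 < pj + 2" "v ! i = w ! i" for i
  proof -
    have "\<not> v ! (i+1) < w ! (i+1)"
      using cv(2)[OF that(1) mem(1)[OF that(1)]] lt(1)[OF that(1)] that(2) by auto
    moreover have "\<not> w ! (i+1) < v ! (i+1)"
      using cv(1)[OF that(1) mem(2)[OF that(1)]] lt(2)[OF that(1)] that(2) by auto
    ultimately show ?thesis by auto
  qed
  have down: "v ! i = w ! i" if "i + 1 < pj + 2" "v ! (i+1) = w ! (i+1)" for i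
  proof -
    have a: "i < pj + 2" using that by simp
    have "\<not> v ! i < w ! i"
      using cv(1)[OF that(1) mem(2)[OF a]] lt(2)[OF that(1)] that(2) by auto
    moreover have "\<not> w ! i < v ! i"
      using cv(2)[OF that(1) mem(1)[OF a]] lt(1)[OF that(1)] that(2) by auto
    ultimately show ?thesis by auto
  qed
  have vq: "v ! qj = w ! qj" using v w by (auto simp: is_lkv_def)
  have U: "\<forall>t. qj + t < pj + 2 \<longrightarrow> v ! (qj + t) = w ! (qj + t)"
  proof
    fix t show "qj + t < pj + 2 \<longrightarrow> v ! (qj + t) = w ! (qj + t)"
      by (induction t) (use vq up in \<open>auto simp: add.assoc[symmetric]\<close>)
  qed
  have D: "\<forall>t. t \<le> qj \<longrightarrow> v ! (qj - t) = w ! (qj - t)"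
  proof
    fix t show "t \<le> qj \<longrightarrow> v ! (qj - t) = w ! (qj - t)"
    proof (induction t)
      case 0 then show ?case using vq by simp
    next
      case (Suc t)
      show ?case
      proof
        assume "Suc t \<le> qj"
        then have e: "qj - Suc t + 1 = qj - t" by simp
        have "v ! (qj - Suc t + 1) = w ! (qj - Suc t + 1)" using Suc \<open>Suc t \<le> qj\<close> e by simp
        then show "v ! (qj - Suc t) = w ! (qj - Suc t)" using down e q by (metis diff_le_self le_less_trans)
      qed
    qed
  qed
  show ?thesis
  proof (rule nth_equalityI)
    show "length v = length w" using lv by simp
    fix i assume "i < length v"
    show "v ! i = w ! i"
    proof (cases "qj \<le> i")
      case True
      then show ?thesis using U[rule_format, of "i - qj"] \<open>i < length v\<close> lv by simp
    next
      case False
      then show ?thesis using D[rule_format, of "qj - i"] by simp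
    qed
  qed
qed

lemma is_lkv_exists:
  fixes K :: "int set"
  assumes fin: "finite K" and a: "a \<in> K" and below: "qj \<le> card {x\<in>K. x < a}"
    and above: "pj + 1 - qj \<le> card {x\<in>K. a < x}" and q: "qj \<le> pj + 1"
  shows "\<exists>v. is_lkv K pj qj a v"
proof -
  define Ks where "Ks = sorted_list_of_set K"
  have sK: "sorted_wrt (<) Ks" unfolding Ks_def by (rule strict_sorted_list_of_set)
  have setK: "set Ks = K" unfolding Ks_def using fin by simp
  obtain idx where idx: "idx < length Ks" "Ks ! idx = a" using a setK by (metis in_set_conv_nth)
  have "{x\<in>K. x < a} \<subseteq> (!) Ks ` {..<idx}"
  proof
    fix x assume "x \<in> {x\<in>K. x < a}"
    then obtain t where t: "t < length Ks" "Ks ! t = x" "x < a" using setK by (auto simp: in_set_conv_nth)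
    then have "t < idx" using sw_less_iff[OF sK t(1) idx(1)] idx by simp
    then show "x \<in> (!) Ks ` {..<idx}" using t by auto
  qed
  then have "card {x\<in>K. x < a} \<le> card ((!) Ks ` {..<idx})"
    by (intro card_mono) auto
  also have "\<dots> \<le> idx" using card_image_le[of "{..<idx}" "(!) Ks"] by simp
  finally have "card {x\<in>K. x < a} \<le> idx" .
  then have i1: "qj \<le> idx" using below by simp
  have "{x\<in>K. a < x} \<subseteq> (!) Ks ` {idx<..<length Ks}"
  proof
    fix x assume "x \<in> {x\<in>K. a < x}"
    then obtain t where t: "t < length Ks" "Ks ! t = x" "a < x" using setK by (auto simp: in_set_conv_nth)
    then have "idx < t" using sw_less_iff[OF sK idx(1) t(1)] idx by simp
    then show "x \<in> (!) Ks ` {idx<..<length Ks}" using t by auto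
  qed
  then have "card {x\<in>K. a < x} \<le> card ((!) Ks ` {idx<..<length Ks})"
    by (intro card_mono) auto
  also have "\<dots> \<le> length Ks - Suc idx" using card_image_le[of "{idx<..<length Ks}" "(!) Ks"] by simp
  finally have "card {x\<in>K. a < x} \<le> length Ks - Suc idx" .
  then have i2: "idx - qj + (pj + 2) \<le> length Ks" using above i1 idx q by linarith
  define s where "s = idx - qj"
  define v where "v = take (pj + 2) (drop s Ks)"
  have lv: "length v = pj + 2" using i2 unfolding v_def s_def by simp
  have vn: "\<And>i. i < pj + 2 \<Longrightarrow> v ! i = Ks ! (s + i)" using i2 unfolding v_def s_def by simp
  have "is_lkv K pj qj a v"
    unfolding is_lkv_def
  proof (intro conjI allI impI)
    show "length v = pj + 2" by (rule lv)
    show "sorted_wrt (<) v" unfolding v_def using sK by (simp add: sorted_wrt_take sorted_wrt_drop)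
    show "set v \<subseteq> K" unfolding v_def using setK by (metis set_drop_subset set_take_subset order_trans)
    show "v ! qj = a" using vn[of qj] q i1 idx unfolding s_def by simp
    fix i assume i: "i + 1 < length v"
    show "\<not> (\<exists>n\<in>K. v ! i < n \<and> n < v ! (i + 1))"
    proof
      assume "\<exists>n\<in>K. v ! i < n \<and> n < v ! (i + 1)"
      then obtain n where n: "n \<in> K" "v ! i < n" "n < v ! (i + 1)" by blast
      obtain t where t: "t < length Ks" "Ks ! t = n" using n(1) setK by (metis in_set_conv_nth)
      have b1: "s + i < length Ks" "s + (i + 1) < length Ks" using i lv i2 unfolding s_def by auto
      have "s + i < t" using sw_less_iff[OF sK b1(1) t(1)] n vn[of i] i lv t by simp
      moreover have "t < s + (i+1)" using sw_less_iff[OF sK t(1) b1(2)] n vn[of "i+1"] i lv t by simp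
      ultimately show False by simp
    qed
  qed
  then show ?thesis by blast
qed

lemma is_lkv_mem:
  assumes v: "is_lkv K pj qj a v" and h: "hd v \<le> n" "n \<le> last v" and n: "n \<in> K"
  shows "n \<in> set v"
proof (rule ccontr)
  assume nv: "n \<notin> set v"
  have lv: "length v = pj + 2" and sv: "sorted_wrt (<) v"
    and cv: "\<And>i. i + 1 < length v \<Longrightarrow> \<not> (\<exists>n\<in>K. v ! i < n \<and> n < v ! (i + 1))"
    using v by (auto simp: is_lkv_def)
  have ne: "v \<noteq> []" using lv by auto
  have h0: "v ! 0 \<le> n" using h ne by (simp add: hd_conv_nth)
  have hl: "n \<le> v ! (length v - 1)" using h ne by (simp add: last_conv_nth)
  define S where "S = {i. i < length v \<and> v ! i < n}"
  have "v ! 0 \<noteq> n" using nv ne by (metis length_greater_0_conv nth_mem)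
  then have "0 \<in> S" using h0 ne unfolding S_def by auto
  have fS: "finite S" unfolding S_def by simp
  define i where "i = Max S"
  have iS: "i \<in> S" unfolding i_def using fS \<open>0 \<in> S\<close> Max_in by blast
  have "i + 1 < length v"
  proof (rule ccontr)
    assume "\<not> i + 1 < length v"
    then have "i = length v - 1" using iS unfolding S_def by auto
    then show False using iS hl unfolding S_def by auto
  qed
  moreover have "i + 1 \<notin> S" using Max_ge[OF fS] unfolding i_def by fastforce
  then have "n < v ! (i+1)"
  proof -
    have "\<not> v ! (i+1) < n" using \<open>i + 1 \<notin> S\<close> \<open>i + 1 < length v\<close> unfolding S_def by auto
    moreover have "v ! (i+1) \<noteq> n" using nv \<open>i + 1 < length v\<close> by (metis nth_mem)
    ultimately show ?thesis by auto
  qed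
  moreover have "v ! i < n" using iS unfolding S_def by auto
  ultimately show False using cv[of i] n by blast
qed




lemma swlt: "sorted_wrt (<) (xs::'a::linorder list) \<Longrightarrow> i < length xs \<Longrightarrow> j < length xs \<Longrightarrow> xs ! i < xs ! j \<Longrightarrow> i < j"
  using sw_less_iff by blast
lemma swlt2: "sorted_wrt (<) (xs::'a::linorder list) \<Longrightarrow> i < j \<Longrightarrow> j < length xs \<Longrightarrow> xs ! i < xs ! j"
  using sorted_wrt_nth_less by blast
lemma swle2: "sorted_wrt (<) (xs::'a::linorder list) \<Longrightarrow> i \<le> j \<Longrightarrow> j < length xs \<Longrightarrow> xs ! i \<le> xs ! j"
proof (cases "i = j")
  case False
  assume a: "sorted_wrt (<) xs" "i \<le> j" "j < length xs"
  then have "i < j" using False by simp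
  then have "xs ! i < xs ! j" using sorted_wrt_nth_less[OF a(1) _ a(3)] by blast
  then show ?thesis by (rule less_imp_le)
qed simp

lemma overlap_agree:
  fixes v w :: "int list"
  assumes ov: "overlap v w" and sv: "sorted_wrt (<) v" and w: "w \<noteq> []"
    and h: "hd w \<le> n" "n \<le> last w" and n: "n \<in> set v"
  shows "n \<in> set w"
proof -
  obtain xs k1 k2 where xs: "sorted xs"
    and b1: "\<forall>r<length v. r + k1 < length xs \<and> v ! r = xs ! (r + k1)"
    and b2: "\<forall>r<length w. r + k2 < length xs \<and> w ! r = xs ! (r + k2)"
    using ov unfolding overlap_def by blast
  obtain r where r: "r < length v" "v ! r = n" using n by (metis in_set_conv_nth)
  have nx: "n = xs ! (r + k1)" "r + k1 < length xs" using b1 r by auto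
  define lw where "lw = length w"
  have lw: "0 < lw" using w unfolding lw_def by simp
  have hw: "hd w = xs ! k2" "k2 < length xs" using b2 w lw unfolding lw_def by (auto simp: hd_conv_nth)
  have lwx: "last w = xs ! (lw - 1 + k2)" "lw - 1 + k2 < length xs"
    using b2 w lw unfolding lw_def by (auto simp: last_conv_nth)
  consider (a) "r + k1 < k2" | (b) "lw - 1 + k2 < r + k1" | (c) "k2 \<le> r + k1" "r + k1 \<le> lw - 1 + k2"
    by linarith
  then show ?thesis
  proof cases
    case a
    then have "n \<le> hd w" using xs sorted_nth_mono[OF xs, of "r + k1" k2] nx hw by simp
    then have "n = hd w" using h by simp
    then show ?thesis using w by simp
  next
    case b
    then have "last w \<le> n" using xs sorted_nth_mono[OF xs, of "lw - 1 + k2" "r + k1"] nx lwx by simp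
    then have "n = last w" using h by simp
    then show ?thesis using w by simp
  next
    case c
    define t where "t = r + k1 - k2"
    have "t < length w" using c lw unfolding t_def lw_def by linarith
    moreover have "w ! t = n" using b2 \<open>t < length w\<close> c nx unfolding t_def by auto
    ultimately show ?thesis by (metis nth_mem)
  qed
qed

lemma block_of_sorted:
  fixes v xs :: "int list"
  assumes sx: "sorted_wrt (<) xs" and sv: "sorted_wrt (<) v" and ne: "v \<noteq> []"
    and sets: "set v = {x \<in> set xs. hd v \<le> x \<and> x \<le> last v}"
  shows "\<exists>k. \<forall>r<length v. r + k < length xs \<and> v ! r = xs ! (r + k)"
proof -
  have "hd v \<in> set v" using ne by simp
  then have hv: "hd v \<in> set xs" using sets by blast
  then obtain k where k: "k < length xs" "xs ! k = hd v" by (metis in_set_conv_nth)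
  have bnd: "hd v \<le> v ! r \<and> v ! r \<le> last v" if "r < length v" for r
  proof -
    have "v ! r \<in> set v" using that by simp
    then show ?thesis using sets by blast
  qed
  have "\<forall>r. r < length v \<longrightarrow> r + k < length xs \<and> v ! r = xs ! (r + k)"
  proof
    fix r show "r < length v \<longrightarrow> r + k < length xs \<and> v ! r = xs ! (r + k)"
    proof (induction r)
      case 0 then show ?case using k ne by (simp add: hd_conv_nth)
    next
      case (Suc r)
      show ?case
      proof
        assume r1: "Suc r < length v"
        then have IH: "r + k < length xs" "v ! r = xs ! (r + k)" using Suc by auto
        have "v ! Suc r \<in> set v" using r1 by simp
        then have "v ! Suc r \<in> set xs" using sets by blast
        then obtain t where t: "t < length xs" "xs ! t = v ! Suc r" by (metis in_set_conv_nth)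
        have lt: "v ! r < v ! Suc r" using sv r1 sorted_wrt_nth_less by blast
        then have "r + k < t" using swlt[OF sx IH(1) t(1)] IH t by simp
        have "t = Suc r + k"
        proof (rule ccontr)
          assume "t \<noteq> Suc r + k"
          then have tt: "Suc r + k < t" using \<open>r + k < t\<close> by simp
          then have m: "Suc r + k < length xs" using t by simp
          have y1: "v ! r < xs ! (Suc r + k)" using swlt2[OF sx _ m, of "r + k"] IH by simp
          have y2: "xs ! (Suc r + k) < v ! Suc r" using swlt2[OF sx tt t(1)] t by simp
          have "hd v \<le> xs ! (Suc r + k)" using bnd[of r] r1 y1 by simp
          moreover have "xs ! (Suc r + k) \<le> last v" using bnd[of "Suc r"] r1 y2 by simp
          ultimately have "xs ! (Suc r + k) \<in> set v" using sets m by auto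
          then obtain s where s: "s < length v" "v ! s = xs ! (Suc r + k)" by (metis in_set_conv_nth)
          have "r < s" using swlt[OF sv _ s(1), of r] r1 y1 s by simp
          moreover have "s < Suc r" using swlt[OF sv s(1) r1] y2 s by simp
          ultimately show False by simp
        qed
        then show "Suc r + k < length xs \<and> v ! Suc r = xs ! (Suc r + k)" using t by simp
      qed
    qed
  qed
  then show ?thesis by blast
qed

lemma agree_overlap:
  fixes v w :: "int list"
  assumes sv: "sorted_wrt (<) v" and sw: "sorted_wrt (<) w" and nv: "v \<noteq> []" and nw: "w \<noteq> []"
    and ag1: "\<And>n. n \<in> set w \<Longrightarrow> hd v \<le> n \<Longrightarrow> n \<le> last v \<Longrightarrow> n \<in> set v"
    and ag2: "\<And>n. n \<in> set v \<Longrightarrow> hd w \<le> n \<Longrightarrow> n \<le> last w \<Longrightarrow> n \<in> set w"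
  shows "overlap v w"
proof -
  define xs where "xs = sorted_list_of_set (set v \<union> set w)"
  have sx: "sorted_wrt (<) xs" unfolding xs_def by (rule strict_sorted_list_of_set)
  have setx: "set xs = set v \<union> set w" unfolding xs_def by simp
  have bndv: "hd v \<le> x \<and> x \<le> last v" if xin: "x \<in> set v" for x
  proof -
    obtain r where r: "r < length v" "v ! r = x" using xin by (metis in_set_conv_nth)
    have "v ! 0 \<le> v ! r" using swle2[OF sv, of 0 r] r by blast
    moreover have "v ! r \<le> v ! (length v - 1)" using swle2[OF sv, of r "length v - 1"] r by auto
    ultimately show ?thesis using nv r by (simp add: hd_conv_nth last_conv_nth)
  qed
  have bndw: "hd w \<le> x \<and> x \<le> last w" if xin: "x \<in> set w" for x
  proof -
    obtain r where r: "r < length w" "w ! r = x" using xin by (metis in_set_conv_nth)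
    have "w ! 0 \<le> w ! r" using swle2[OF sw, of 0 r] r by blast
    moreover have "w ! r \<le> w ! (length w - 1)" using swle2[OF sw, of r "length w - 1"] r by auto
    ultimately show ?thesis using nw r by (simp add: hd_conv_nth last_conv_nth)
  qed
  have s1: "set v = {x \<in> set xs. hd v \<le> x \<and> x \<le> last v}"
  proof (intro equalityI subsetI)
    fix x assume "x \<in> set v" then show "x \<in> {x \<in> set xs. hd v \<le> x \<and> x \<le> last v}"
      using setx bndv by blast
  next
    fix x assume "x \<in> {x \<in> set xs. hd v \<le> x \<and> x \<le> last v}"
    then have "x \<in> set v \<or> x \<in> set w" "hd v \<le> x" "x \<le> last v" using setx by auto
    then show "x \<in> set v" using ag1 by blast
  qed
  have s2: "set w = {x \<in> set xs. hd w \<le> x \<and> x \<le> last w}"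
  proof (intro equalityI subsetI)
    fix x assume "x \<in> set w" then show "x \<in> {x \<in> set xs. hd w \<le> x \<and> x \<le> last w}"
      using setx bndw by blast
  next
    fix x assume "x \<in> {x \<in> set xs. hd w \<le> x \<and> x \<le> last w}"
    then have "x \<in> set v \<or> x \<in> set w" "hd w \<le> x" "x \<le> last w" using setx by auto
    then show "x \<in> set w" using ag2 by blast
  qed
  obtain k1 where k1: "\<forall>r<length v. r + k1 < length xs \<and> v ! r = xs ! (r + k1)"
    using block_of_sorted[OF sx sv nv s1] by blast
  obtain k2 where k2: "\<forall>r<length w. r + k2 < length xs \<and> w ! r = xs ! (r + k2)"
    using block_of_sorted[OF sx sw nw s2] by blast
  have dv: "distinct v" "distinct w" "distinct xs" using sv sw sx by (auto simp: strict_sorted_iff)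
  have "card (set v) \<le> card (set xs)" using setx by (intro card_mono) auto
  then have "length v \<le> length xs"
    using distinct_card[OF dv(1)] distinct_card[OF dv(3)] by simp
  moreover have "card (set w) \<le> card (set xs)" using setx by (intro card_mono) auto
  then have "length w \<le> length xs"
    using distinct_card[OF dv(2)] distinct_card[OF dv(3)] by simp
  moreover have "sorted xs" using sx by (simp add: strict_sorted_iff)
  ultimately have "sorted xs \<and> length xs \<ge> max (length v) (length w) \<and>
      (\<forall>r<length v. r + k1 < length xs \<and> v ! r = xs ! (r + k1)) \<and>
      (\<forall>r<length w. r + k2 < length xs \<and> w ! r = xs ! (r + k2))" using k1 k2 by simp
  then show ?thesis unfolding overlap_def by blast
qed




definition mb :: "nat \<Rightarrow> (nat \<Rightarrow> int) \<Rightarrow> ent set \<Rightarrow> bool" where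
  "mb d N T \<longleftrightarrow> (\<forall>E\<in>T. \<forall>l<d. (\<exists>n. E l = Pt n \<and> 0 \<le> n \<and> n \<le> N l) \<or>
      (\<exists>a b. E l = Iv a b \<and> 0 \<le> a \<and> a < b \<and> b \<le> N l))"

lemma mid_bounds:
  fixes a b :: int
  assumes "even (a + b)" "a < b"
  shows "a < (a + b) div 2" "(a + b) div 2 < b"
proof -
  obtain c where c: "a + b = 2 * c" using assms(1) unfolding dvd_def by blast
  then have "(a + b) div 2 = c" by simp
  then show "a < (a + b) div 2" "(a + b) div 2 < b" using c assms(2) by linarith+
qed

lemma subdiv_mem:
  assumes "E' \<in> subdiv d N p T Q j"
  shows "E' \<in> T \<or> (\<exists>E\<in>T. E j = Q j \<and>
     (E' = E(j := Iv (lo (Q j)) ((lo (Q j) + hi (Q j)) div 2)) \<or>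
      E' = E(j := Pt ((lo (Q j) + hi (Q j)) div 2)) \<or>
      E' = E(j := Iv ((lo (Q j) + hi (Q j)) div 2) (hi (Q j)))))"
  using assms unfolding subdiv_def Let_def by auto

lemma subdiv_keep:
  assumes "C \<in> T"
  shows "C \<in> subdiv d N p T Q j \<or> (C j = Q j \<and>
     C(j := Iv (lo (Q j)) ((lo (Q j) + hi (Q j)) div 2)) \<in> subdiv d N p T Q j \<and>
     C(j := Iv ((lo (Q j) + hi (Q j)) div 2) (hi (Q j))) \<in> subdiv d N p T Q j)"
  using assms unfolding subdiv_def Let_def by auto

lemma cell_Iv:
  assumes "mb d N T" "Q \<in> T" "is_cell d Q" "j < d"
  shows "Q j = Iv (lo (Q j)) (hi (Q j)) \<and> 0 \<le> lo (Q j) \<and> lo (Q j) < hi (Q j) \<and> hi (Q j) \<le> N j"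
proof -
  obtain a b where ab: "Q j = Iv a b" using assms(3,4) unfolding is_cell_def by blast
  then show ?thesis using assms(1,2,4) unfolding mb_def by force
qed

lemma mb_meshes:
  assumes "T \<in> meshes d N p"
  shows "mb d N T"
  using assms
proof (induction rule: meshes.induct)
  case (tp G)
  show ?case unfolding mb_def
  proof (intro ballI allI impI)
    fix E l assume E: "E \<in> tp_mesh d G" and l: "l < d"
    have g: "grid_comp (G l) (E l)" using E l unfolding tp_mesh_def by auto
    have sub: "G l \<subseteq> {0..N l}" using tp l unfolding valid_grid_def by auto
    show "(\<exists>n. E l = Pt n \<and> 0 \<le> n \<and> n \<le> N l) \<or> (\<exists>a b. E l = Iv a b \<and> 0 \<le> a \<and> a < b \<and> b \<le> N l)"
      using g sub unfolding grid_comp_def by fastforce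
  qed
next
  case (step T Q j)
  have Qj: "Q j = Iv (lo (Q j)) (hi (Q j))" "0 \<le> lo (Q j)" "lo (Q j) < hi (Q j)" "hi (Q j) \<le> N j"
    using cell_Iv[OF step.IH step.hyps(2,3,5)] by auto
  define m where "m = (lo (Q j) + hi (Q j)) div 2"
  have m: "lo (Q j) < m" "m < hi (Q j)" using mid_bounds[OF step.hyps(6) Qj(3)] unfolding m_def by auto
  show ?case unfolding mb_def
  proof (intro ballI allI impI)
    fix E' l assume E': "E' \<in> subdiv d N p T Q j" and l: "l < d"
    from subdiv_mem[OF E'] show "(\<exists>n. E' l = Pt n \<and> 0 \<le> n \<and> n \<le> N l) \<or> (\<exists>a b. E' l = Iv a b \<and> 0 \<le> a \<and> a < b \<and> b \<le> N l)"
    proof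
      assume "E' \<in> T" then show ?thesis using step.IH l unfolding mb_def by blast
    next
      assume "\<exists>E\<in>T. E j = Q j \<and>
       (E' = E(j := Iv (lo (Q j)) ((lo (Q j) + hi (Q j)) div 2)) \<or>
        E' = E(j := Pt ((lo (Q j) + hi (Q j)) div 2)) \<or>
        E' = E(j := Iv ((lo (Q j) + hi (Q j)) div 2) (hi (Q j))))"
      then obtain E where E: "E \<in> T" "E j = Q j"
        and c: "E' = E(j := Iv (lo (Q j)) m) \<or> E' = E(j := Pt m) \<or> E' = E(j := Iv m (hi (Q j)))"
        unfolding m_def by blast
      show ?thesis
      proof (cases "l = j")
        case True
        then show ?thesis using c m Qj by auto
      next
        case False
        then have "E' l = E l" using c by auto
        then show ?thesis using step.IH E l unfolding mb_def by auto
      qed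
    qed
  qed
qed

lemma skel_subdiv_mono:
  assumes mbT: "mb d N T" and Q: "Q \<in> T" "is_cell d Q" and j: "j < d" and ev: "even (lo (Q j) + hi (Q j))"
  shows "skel d T k \<subseteq> skel d (subdiv d N p T Q j) k"
proof
  fix x assume "x \<in> skel d T k"
  then obtain C where C: "C \<in> T" "is_cell d C" "x \<in> ent_closure d C"
    "x k = of_int (lo (C k)) \<or> x k = of_int (hi (C k))"
    unfolding skel_def by auto
  have Qj: "Q j = Iv (lo (Q j)) (hi (Q j))" "lo (Q j) < hi (Q j)"
    using cell_Iv[OF mbT Q j] by auto
  define a where "a = lo (Q j)"
  define b where "b = hi (Q j)"
  define m where "m = (lo (Q j) + hi (Q j)) div 2"
  have m: "a < m" "m < b" using mid_bounds[OF ev Qj(2)] unfolding m_def a_def b_def by auto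
  let ?S = "subdiv d N p T Q j"
  from subdiv_keep[OF C(1), of d N p Q j]
  show "x \<in> skel d ?S k"
  proof
    assume "C \<in> ?S" then show ?thesis using C unfolding skel_def by auto
  next
    assume "C j = Q j \<and>
     C(j := Iv (lo (Q j)) ((lo (Q j) + hi (Q j)) div 2)) \<in> ?S \<and>
     C(j := Iv ((lo (Q j) + hi (Q j)) div 2) (hi (Q j))) \<in> ?S"
    then have Cj: "C j = Q j" and C1: "C(j := Iv a m) \<in> ?S" and C2: "C(j := Iv m b) \<in> ?S"
      unfolding a_def b_def m_def by auto
    have lC: "lo (C j) = a" "hi (C j) = b" using Cj unfolding a_def b_def by auto
    have xp: "x \<in> points d" and xb: "\<And>l. l < d \<Longrightarrow> of_int (lo (C l)) \<le> x l \<and> x l \<le> of_int (hi (C l))"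
      using C(3) unfolding ent_closure_def by auto
    have cell1: "is_cell d (C(j := Iv a m))" "is_cell d (C(j := Iv m b))"
      using C(2) unfolding is_cell_def by auto
    show ?thesis
    proof (cases "x j \<le> of_int m")
      case True
      have "x \<in> ent_closure d (C(j := Iv a m))"
        unfolding ent_closure_def using xp xb True lC j by auto
      moreover have "x k = of_int (lo ((C(j := Iv a m)) k)) \<or> x k = of_int (hi ((C(j := Iv a m)) k))"
      proof (cases "k = j")
        case True
        then have "x j = of_int a \<or> x j = of_int b" using C(4) lC by auto
        moreover have "x j \<noteq> of_int b" using \<open>x j \<le> of_int m\<close> m by auto
        ultimately show ?thesis using True by auto
      next
        case False then show ?thesis using C(4) by auto
      qed
      ultimately show ?thesis using C1 cell1 unfolding skel_def by blast
    next
      case False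
      have "x \<in> ent_closure d (C(j := Iv m b))"
        unfolding ent_closure_def using xp xb False lC j by auto
      moreover have "x k = of_int (lo ((C(j := Iv m b)) k)) \<or> x k = of_int (hi ((C(j := Iv m b)) k))"
      proof (cases "k = j")
        case True
        then have "x j = of_int a \<or> x j = of_int b" using C(4) lC by auto
        moreover have "x j \<noteq> of_int a" using False m by auto
        ultimately show ?thesis using True by auto
      next
        case False then show ?thesis using C(4) by auto
      qed
      ultimately show ?thesis using C2 cell1 unfolding skel_def by blast
    qed
  qed
qed

definition consec :: "int set \<Rightarrow> int \<Rightarrow> int \<Rightarrow> bool" where
  "consec G a b \<longleftrightarrow> a \<in> G \<and> b \<in> G \<and> a < b \<and> (\<forall>g\<in>G. \<not> (a < g \<and> g < b))"

lemma consec_up: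
  assumes fin: "finite G" and g: "g \<in> G" and lt: "g < h" "h \<in> G"
  shows "\<exists>b. consec G g b"
proof -
  define S where "S = {x\<in>G. g < x}"
  have fS: "finite S" "S \<noteq> {}" using fin lt unfolding S_def by auto
  define b where "b = Min S"
  have "b \<in> S" unfolding b_def using fS by simp
  moreover have "\<And>x. x \<in> S \<Longrightarrow> b \<le> x" unfolding b_def using fS by simp
  ultimately have "consec G g b" unfolding consec_def S_def using g by force
  then show ?thesis by blast
qed

lemma consec_down:
  assumes fin: "finite G" and g: "g \<in> G" and lt: "h < g" "h \<in> G"
  shows "\<exists>a. consec G a g"
proof -
  define S where "S = {x\<in>G. x < g}"
  have fS: "finite S" "S \<noteq> {}" using fin lt unfolding S_def by auto
  define a where "a = Max S"
  have "a \<in> S" unfolding a_def using fS by simp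
  moreover have "\<And>x. x \<in> S \<Longrightarrow> x \<le> a" unfolding a_def using fS by simp
  ultimately have "consec G a g" unfolding consec_def S_def using g by force
  then show ?thesis by blast
qed

lemma consec_at:
  assumes fin: "finite G" and sub: "G \<subseteq> {0..Nk}" and z: "0 \<in> G" "Nk \<in> G" and N1: "1 \<le> Nk" and g: "g \<in> G"
  shows "\<exists>a b. consec G a b \<and> (g = a \<or> g = b)"
proof (cases "g < Nk")
  case True
  then show ?thesis using consec_up[OF fin g True z(2)] by blast
next
  case False
  then have "g = Nk" using sub g by auto
  then have "0 < g" using N1 by simp
  then show ?thesis using consec_down[OF fin g _ z(1)] by blast
qed

lemma consec_real:
  fixes y :: real
  assumes fin: "finite G" and sub: "G \<subseteq> {0..Nk}" and z: "0 \<in> G" "Nk \<in> G" and N1: "1 \<le> Nk"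
    and y: "0 \<le> y" "y \<le> of_int Nk"
  shows "\<exists>a b. consec G a b \<and> of_int a \<le> y \<and> y \<le> of_int b"
proof -
  define S where "S = {x\<in>G. of_int x \<le> y}"
  have fS: "finite S" "S \<noteq> {}" using fin z y unfolding S_def by auto
  define a where "a = Max S"
  have aS: "a \<in> S" unfolding a_def using fS by simp
  have amax: "\<And>x. x \<in> S \<Longrightarrow> x \<le> a" unfolding a_def using fS by simp
  show ?thesis
  proof (cases "a < Nk")
    case True
    obtain b where b: "consec G a b" using consec_up[OF fin _ True z(2)] aS unfolding S_def by blast
    have "\<not> of_int b \<le> y"
    proof
      assume "of_int b \<le> y"
      then have "b \<in> S" using b unfolding S_def consec_def by auto
      then show False using amax b unfolding consec_def by force
    qed
    then have "y \<le> of_int b" by linarith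
    moreover have "of_int a \<le> y" using aS unfolding S_def by auto
    ultimately show ?thesis using b by blast
  next
    case False
    then have aN: "a = Nk" using aS sub unfolding S_def by auto
    then have yN: "y = of_int Nk" using aS y unfolding S_def by auto
    obtain a' where "consec G a' Nk" using consec_down[OF fin z(2), of 0] N1 z(1) by auto
    moreover then have "of_int a' \<le> y" using yN unfolding consec_def by auto
    ultimately show ?thesis using yN by auto
  qed
qed

lemma grid_comp_consec: "consec G a b \<Longrightarrow> grid_comp G (Iv a b)"
  unfolding consec_def grid_comp_def by blast

lemma slice_skel:
  assumes "T \<in> meshes d N p" and N1: "\<forall>k<d. N k \<ge> 1" and k: "k < d"
    and n: "(0 \<le> n \<and> n \<le> qq p k) \<or> (N k - qq p k \<le> n \<and> n \<le> N k)"
  shows "{x \<in> Omega_bar d N. x k = of_int n} \<subseteq> skel d T k"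
  using assms(1)
proof (induction rule: meshes.induct)
  case (tp G)
  show ?case
  proof
    fix x assume x: "x \<in> {x \<in> Omega_bar d N. x k = of_int n}"
    have vg: "\<And>l. l < d \<Longrightarrow> G l \<subseteq> {0..N l} \<and> {0..qq p l} \<subseteq> G l \<and> {N l - qq p l..N l} \<subseteq> G l"
      using tp unfolding valid_grid_def by blast
    have q0: "\<And>l. 0 \<le> qq p l" unfolding qq_def by simp
    have sub: "\<And>l. l < d \<Longrightarrow> G l \<subseteq> {0..N l}" using vg by blast
    have fin: "\<And>l. l < d \<Longrightarrow> finite (G l)" using sub finite_subset by blast
    have z: "\<And>l. l < d \<Longrightarrow> 0 \<in> G l" "\<And>l. l < d \<Longrightarrow> N l \<in> G l"
    proof -
      fix l assume l: "l < d"
      have "0 \<in> {0..qq p l}" using q0[of l] by simp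
      then show "0 \<in> G l" using vg[OF l] by blast
      have "N l \<in> {N l - qq p l..N l}" using q0[of l] by simp
      then show "N l \<in> G l" using vg[OF l] by blast
    qed
    have "n \<in> {0..qq p k} \<or> n \<in> {N k - qq p k..N k}" using n by auto
    then have nG: "n \<in> G k" using vg[OF k] by blast
    have xb: "\<And>l. l < d \<Longrightarrow> 0 \<le> x l \<and> x l \<le> of_int (N l)" and xp: "x \<in> points d"
      using x unfolding Omega_bar_def by auto
    have "\<forall>l. \<exists>ab. l < d \<longrightarrow> consec (G l) (fst ab) (snd ab) \<and> of_int (fst ab) \<le> x l \<and> x l \<le> of_int (snd ab)
        \<and> (l = k \<longrightarrow> (n = fst ab \<or> n = snd ab))"
    proof
      fix l show "\<exists>ab. l < d \<longrightarrow> consec (G l) (fst ab) (snd ab) \<and> of_int (fst ab) \<le> x l \<and> x l \<le> of_int (snd ab)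
        \<and> (l = k \<longrightarrow> (n = fst ab \<or> n = snd ab))"
      proof (cases "l < d")
        case False then show ?thesis by simp
      next
        case True
        show ?thesis
        proof (cases "l = k")
          case True
          obtain a b where ab: "consec (G k) a b" "n = a \<or> n = b"
            using consec_at[OF fin[OF k] sub[OF k] z(1)[OF k] z(2)[OF k] _ nG] N1 k by blast
          then have "of_int a \<le> x k \<and> x k \<le> of_int b" using x unfolding consec_def by auto
          then show ?thesis using ab True by (intro exI[of _ "(a, b)"]) auto
        next
          case False
          obtain a b where ab: "consec (G l) a b" "of_int a \<le> x l" "x l \<le> of_int b"
            using consec_real[OF fin[OF \<open>l < d\<close>] sub[OF \<open>l < d\<close>] z(1)[OF \<open>l < d\<close>] z(2)[OF \<open>l < d\<close>] _ ] xb[OF \<open>l < d\<close>] N1 \<open>l < d\<close> by blast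
          then show ?thesis using False by (intro exI[of _ "(a, b)"]) auto
        qed
      qed
    qed
    then obtain f where f: "\<And>l. l < d \<Longrightarrow> consec (G l) (fst (f l)) (snd (f l)) \<and> of_int (fst (f l)) \<le> x l \<and> x l \<le> of_int (snd (f l))
        \<and> (l = k \<longrightarrow> (n = fst (f l) \<or> n = snd (f l)))"
      by metis
    define C where "C = (\<lambda>l. if l < d then Iv (fst (f l)) (snd (f l)) else Pt 0)"
    have "C \<in> tp_mesh d G" unfolding tp_mesh_def C_def using f grid_comp_consec by auto
    moreover have "is_cell d C" unfolding is_cell_def C_def by auto
    moreover have "x \<in> ent_closure d C" unfolding ent_closure_def C_def using xp f by auto
    moreover have "x k = of_int (lo (C k)) \<or> x k = of_int (hi (C k))"
      using f[OF k] x k unfolding C_def by auto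
    ultimately show "x \<in> skel d (tp_mesh d G) k" unfolding skel_def by blast
  qed
next
  case (step T Q j)
  have "mb d N T" using mb_meshes[OF step.hyps(1)] .
  then show ?case using skel_subdiv_mono[OF _ step.hyps(2,3,5,6)] step.IH by blast
qed




definition zlo :: "nat \<Rightarrow> ent \<Rightarrow> nat \<Rightarrow> real" where
  "zlo d E = (\<lambda>l. if l < d then (case E l of Pt n \<Rightarrow> of_int n | Iv a b \<Rightarrow> of_int a + 1/2) else 0)"

definition zhi :: "nat \<Rightarrow> ent \<Rightarrow> nat \<Rightarrow> real" where
  "zhi d E = (\<lambda>l. if l < d then (case E l of Pt n \<Rightarrow> of_int n | Iv a b \<Rightarrow> of_int b - 1/2) else 0)"

definition cshape :: "comp \<Rightarrow> bool" where
  "cshape c \<longleftrightarrow> (\<exists>n. c = Pt n) \<or> (\<exists>a b. c = Iv a b \<and> a < b)"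

lemma comp_set_bounds: "cshape c \<Longrightarrow> y \<in> comp_set c \<Longrightarrow> of_int (lo c) \<le> y \<and> y \<le> of_int (hi c)"
  unfolding cshape_def by auto

lemma zlo_in:
  assumes "\<forall>l<d. cshape (E l)"
  shows "zlo d E \<in> ent_set d E"
  unfolding ent_set_def points_def
proof (intro CollectI conjI allI impI)
  fix k assume "d \<le> k" then show "zlo d E k = 0" unfolding zlo_def by simp
next
  fix k assume k: "k < d"
  then have "cshape (E k)" using assms by blast
  then show "zlo d E k \<in> comp_set (E k)" unfolding cshape_def zlo_def using k by auto
qed

lemma zhi_in:
  assumes "\<forall>l<d. cshape (E l)"
  shows "zhi d E \<in> ent_set d E"
  unfolding ent_set_def points_def
proof (intro CollectI conjI allI impI)
  fix k assume "d \<le> k" then show "zhi d E k = 0" unfolding zhi_def by simp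
next
  fix k assume k: "k < d"
  then have "cshape (E k)" using assms by blast
  then show "zhi d E k \<in> comp_set (E k)" unfolding cshape_def zhi_def using k by auto
qed

lemma zlo_upd_in:
  assumes "\<forall>l<d. cshape (E l)" "k < d"
  shows "(zlo d E)(k := of_int n) \<in> ent_set d (E(k := Pt n))"
  using zlo_in[OF assms(1)] assms(2) unfolding ent_set_def points_def by auto

lemma q_nonneg: "0 \<le> qq p l" unfolding qq_def by simp

lemma anchor_basic:
  assumes mbT: "mb d N T" and A: "A \<in> anchors d N p T"
  obtains Q where "Q \<in> T" "is_cell d Q" "ent_set d A \<subseteq> AR d N p"
    "\<And>l. l < d \<Longrightarrow> Q l = Iv (lo (Q l)) (hi (Q l)) \<and> 0 \<le> lo (Q l) \<and> lo (Q l) < hi (Q l) \<and> hi (Q l) \<le> N l"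
    "\<And>l. l < d \<Longrightarrow> (odd (p l) \<and> (A l = Pt (lo (Q l)) \<or> A l = Pt (hi (Q l)))) \<or> (even (p l) \<and> A l = Q l)"
proof -
  obtain Q where Q: "Q \<in> T" "is_cell d Q"
    "\<forall>k. k < d \<and> odd (p k) \<longrightarrow> A k = Pt (lo (Q k)) \<or> A k = Pt (hi (Q k))"
    "\<forall>k. \<not> (k < d \<and> odd (p k)) \<longrightarrow> A k = Q k" "ent_set d A \<subseteq> AR d N p"
    using A unfolding anchors_def by blast
  show ?thesis
  proof (rule that[OF Q(1,2,5)])
    fix l assume l: "l < d"
    show "Q l = Iv (lo (Q l)) (hi (Q l)) \<and> 0 \<le> lo (Q l) \<and> lo (Q l) < hi (Q l) \<and> hi (Q l) \<le> N l"
      using cell_Iv[OF mbT Q(1,2) l] .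
    show "(odd (p l) \<and> (A l = Pt (lo (Q l)) \<or> A l = Pt (hi (Q l)))) \<or> (even (p l) \<and> A l = Q l)"
      using Q(3,4) l by blast
  qed
qed

lemma anchor_cshape:
  assumes mbT: "mb d N T" and A: "A \<in> anchors d N p T"
  shows "\<forall>l<d. cshape (A l)"
proof (intro allI impI)
  fix l assume l: "l < d"
  obtain Q where Q: "\<And>l. l < d \<Longrightarrow> Q l = Iv (lo (Q l)) (hi (Q l)) \<and> 0 \<le> lo (Q l) \<and> lo (Q l) < hi (Q l) \<and> hi (Q l) \<le> N l"
    "\<And>l. l < d \<Longrightarrow> (odd (p l) \<and> (A l = Pt (lo (Q l)) \<or> A l = Pt (hi (Q l)))) \<or> (even (p l) \<and> A l = Q l)"
    using anchor_basic[OF mbT A] by metis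
  show "cshape (A l)" using Q(1)[OF l] Q(2)[OF l] unfolding cshape_def by metis
qed

lemma anchor_bounds:
  assumes mbT: "mb d N T" and A: "A \<in> anchors d N p T" and l: "l < d"
  shows "qq p l \<le> lo (A l)" "hi (A l) \<le> N l - qq p l"
    "odd (p l) \<Longrightarrow> A l = Pt (lo (A l))"
    "even (p l) \<Longrightarrow> lo (A l) < hi (A l) \<and> A l = Iv (lo (A l)) (hi (A l))"
proof -
  obtain Q where Q: "ent_set d A \<subseteq> AR d N p"
    "\<And>l. l < d \<Longrightarrow> Q l = Iv (lo (Q l)) (hi (Q l)) \<and> 0 \<le> lo (Q l) \<and> lo (Q l) < hi (Q l) \<and> hi (Q l) \<le> N l"
    "\<And>l. l < d \<Longrightarrow> (odd (p l) \<and> (A l = Pt (lo (Q l)) \<or> A l = Pt (hi (Q l)))) \<or> (even (p l) \<and> A l = Q l)"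
    using anchor_basic[OF mbT A] by metis
  have cs: "\<forall>l<d. cshape (A l)" by (rule anchor_cshape[OF mbT A])
  have z1: "zlo d A \<in> AR d N p" using zlo_in[OF cs] Q(1) by blast
  have z2: "zhi d A \<in> AR d N p" using zhi_in[OF cs] Q(1) by blast
  have b1: "of_int (qq p l) \<le> zlo d A l" using z1 l unfolding AR_def by auto
  have b2: "zhi d A l \<le> of_int (N l - qq p l)" using z2 l unfolding AR_def by auto
  have shape: "(odd (p l) \<and> (\<exists>n. A l = Pt n)) \<or> (even (p l) \<and> (\<exists>a b. A l = Iv a b \<and> a < b))"
    using Q(2)[OF l] Q(3)[OF l] by metis
  show "qq p l \<le> lo (A l)"
  proof -
    from shape consider (pt) n where "A l = Pt n" | (iv) a b where "A l = Iv a b" "a < b" by blast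
    then show ?thesis
    proof cases
      case pt then show ?thesis using b1 l unfolding zlo_def by simp
    next
      case iv
      then have "of_int (qq p l) \<le> (of_int a + 1/2 :: real)" using b1 l unfolding zlo_def by simp
      then have "qq p l \<le> a" by linarith
      then show ?thesis using iv by simp
    qed
  qed
  show "hi (A l) \<le> N l - qq p l"
  proof -
    from shape consider (pt) n where "A l = Pt n" | (iv) a b where "A l = Iv a b" "a < b" by blast
    then show ?thesis
    proof cases
      case pt then show ?thesis using b2 l unfolding zhi_def by simp
    next
      case iv
      then have "(of_int b - 1/2 :: real) \<le> of_int (N l - qq p l)" using b2 l unfolding zhi_def by simp
      then have "b \<le> N l - qq p l" by linarith
      then show ?thesis using iv by simp
    qed
  qed
  show "odd (p l) \<Longrightarrow> A l = Pt (lo (A l))" using shape by auto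
  show "even (p l) \<Longrightarrow> lo (A l) < hi (A l) \<and> A l = Iv (lo (A l)) (hi (A l))" using shape by auto
qed

lemma anchor_face:
  assumes mbT: "mb d N T" and A: "A \<in> anchors d N p T" and k: "k < d"
  shows "ent_set d (A(k := Pt (lo (A k)))) \<subseteq> skel d T k"
proof
  obtain Q where Q: "Q \<in> T" "is_cell d Q"
    "\<And>l. l < d \<Longrightarrow> Q l = Iv (lo (Q l)) (hi (Q l)) \<and> 0 \<le> lo (Q l) \<and> lo (Q l) < hi (Q l) \<and> hi (Q l) \<le> N l"
    "\<And>l. l < d \<Longrightarrow> (odd (p l) \<and> (A l = Pt (lo (Q l)) \<or> A l = Pt (hi (Q l)))) \<or> (even (p l) \<and> A l = Q l)"
    using anchor_basic[OF mbT A] by metis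
  fix x assume x: "x \<in> ent_set d (A(k := Pt (lo (A k))))"
  have xp: "x \<in> points d" using x unfolding ent_set_def by auto
  have xl: "\<And>l. l < d \<Longrightarrow> l \<noteq> k \<Longrightarrow> x l \<in> comp_set (A l)" using x unfolding ent_set_def by auto
  have xk: "x k = of_int (lo (A k))" using x k unfolding ent_set_def by auto
  have lA: "lo (A k) = lo (Q k) \<or> lo (A k) = hi (Q k)" using Q(4)[OF k] by auto
  have bl: "of_int (lo (Q l)) \<le> x l \<and> x l \<le> of_int (hi (Q l))" if l: "l < d" for l
  proof -
    have Ql: "lo (Q l) < hi (Q l)" using Q(3)[OF l] by simp
    show ?thesis
    proof (cases "l = k")
      case True
      then show ?thesis using xk lA Ql by auto
    next
      case False
      have xA: "x l \<in> comp_set (A l)" using xl[OF l False] .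
      have Qe: "Q l = Iv (lo (Q l)) (hi (Q l))" using Q(3)[OF l] by simp
      have rl: "(of_int (lo (Q l)) :: real) < of_int (hi (Q l))" using Ql by simp
      from Q(4)[OF l] consider (a) "A l = Pt (lo (Q l))" | (b) "A l = Pt (hi (Q l))" | (c) "A l = Q l" by blast
      then show ?thesis
      proof cases
        case a then show ?thesis using xA rl by simp
      next
        case b then show ?thesis using xA rl by simp
      next
        case c
        then have "x l \<in> comp_set (Iv (lo (Q l)) (hi (Q l)))" using xA Qe by simp
        then show ?thesis by simp
      qed
    qed
  qed
  have "x \<in> ent_closure d Q" unfolding ent_closure_def using xp bl by auto
  moreover have "x k = of_int (lo (Q k)) \<or> x k = of_int (hi (Q k))" using xk lA by auto
  ultimately show "x \<in> skel d T k" using Q(1,2) unfolding skel_def by blast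
qed

lemma skel_Omega:
  assumes mbT: "mb d N T"
  shows "skel d T k \<subseteq> Omega_bar d N"
proof
  fix x assume "x \<in> skel d T k"
  then obtain C where C: "C \<in> T" "is_cell d C" "x \<in> ent_closure d C" unfolding skel_def by auto
  show "x \<in> Omega_bar d N" unfolding Omega_bar_def
  proof (intro CollectI conjI allI impI)
    show "x \<in> points d" using C(3) unfolding ent_closure_def by auto
    fix l assume l: "l < d"
    have "0 \<le> lo (C l)" "hi (C l) \<le> N l" using cell_Iv[OF mbT C(1,2) l] by auto
    moreover have "of_int (lo (C l)) \<le> x l \<and> x l \<le> of_int (hi (C l))" using C(3) l unfolding ent_closure_def by auto
    ultimately show "0 \<le> x l" "x l \<le> of_int (N l)" by (smt (verit) of_int_le_iff of_int_0_le_iff)+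
  qed
qed

lemma gkv_bounds:
  assumes mbT: "mb d N T" and A: "A \<in> anchors d N p T" and k: "k < d" and n: "n \<in> gkv d T k A"
  shows "0 \<le> n \<and> n \<le> N k"
proof -
  have "(zlo d A)(k := of_int n) \<in> ent_set d (A(k := Pt n))"
    by (rule zlo_upd_in[OF anchor_cshape[OF mbT A] k])
  then have "(zlo d A)(k := of_int n) \<in> Omega_bar d N"
    using n skel_Omega[OF mbT] unfolding gkv_def by blast
  then show ?thesis using k unfolding Omega_bar_def by auto
qed

lemma anchor_slice:
  assumes mbT: "mb d N T" and A: "A \<in> anchors d N p T" and k: "k < d" and n: "0 \<le> n" "n \<le> N k"
  shows "ent_set d (A(k := Pt n)) \<subseteq> {x \<in> Omega_bar d N. x k = of_int n}"
proof
  fix x assume x: "x \<in> ent_set d (A(k := Pt n))"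
  have cs: "\<forall>l<d. cshape (A l)" by (rule anchor_cshape[OF mbT A])
  have xp: "x \<in> points d" using x unfolding ent_set_def by auto
  have xk: "x k = of_int n" using x k unfolding ent_set_def by auto
  have bl: "0 \<le> x l \<and> x l \<le> of_int (N l)" if l: "l < d" for l
  proof (cases "l = k")
    case True then show ?thesis using xk n by simp
  next
    case False
    then have "x l \<in> comp_set (A l)" using x l unfolding ent_set_def by auto
    then have "of_int (lo (A l)) \<le> x l \<and> x l \<le> of_int (hi (A l))" using comp_set_bounds cs l by blast
    moreover have "qq p l \<le> lo (A l)" "hi (A l) \<le> N l - qq p l" using anchor_bounds[OF mbT A l] by auto
    moreover have "0 \<le> qq p l" by (rule q_nonneg)
    ultimately show ?thesis by (smt (verit) of_int_le_iff of_int_0_le_iff of_int_diff)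
  qed
  show "x \<in> {x \<in> Omega_bar d N. x k = of_int n}"
    unfolding Omega_bar_def using xp xk bl by auto
qed




lemma lkv_ok:
  assumes T: "T \<in> meshes d N p" and N1: "\<forall>k<d. N k \<ge> 1" and A: "A \<in> anchors d N p T" and k: "k < d"
  shows "is_lkv (gkv d T k A) (p k) ((p k + 1) div 2) (lo (A k)) (lkv d p T k A)"
proof -
  have mbT: "mb d N T" by (rule mb_meshes[OF T])
  define K where "K = gkv d T k A"
  define qj where "qj = (p k + 1) div 2"
  define a where "a = lo (A k)"
  define r where "r = p k + 1 - qj"
  have KN: "K \<subseteq> {0..N k}" unfolding K_def using gkv_bounds[OF mbT A k] by auto
  have fin: "finite K" using KN finite_subset by blast
  have aK: "a \<in> K" unfolding K_def a_def gkv_def using anchor_face[OF mbT A k] by simp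
  have qd: "qq p k = int qj" unfolding qq_def qj_def by simp
  have ab: "qq p k \<le> a" "hi (A k) \<le> N k - qq p k" using anchor_bounds[OF mbT A k] unfolding a_def by auto
  have lh: "a \<le> hi (A k)"
  proof (cases "odd (p k)")
    case True then show ?thesis using anchor_bounds(3)[OF mbT A k] unfolding a_def by (metis hi.simps(1) order_refl)
  next
    case False then show ?thesis using anchor_bounds(4)[OF mbT A k] unfolding a_def by simp
  qed
  have q0: "0 \<le> qq p k" by (rule q_nonneg)
  have inK: "n \<in> K" if n: "(0 \<le> n \<and> n \<le> qq p k) \<or> (N k - qq p k \<le> n \<and> n \<le> N k)" for n
  proof -
    have "0 \<le> n" "n \<le> N k" using n ab lh q0 by auto
    then have "ent_set d (A(k := Pt n)) \<subseteq> {x \<in> Omega_bar d N. x k = of_int n}"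
      by (rule anchor_slice[OF mbT A k])
    also have "\<dots> \<subseteq> skel d T k" by (rule slice_skel[OF T N1 k n])
    finally show ?thesis unfolding K_def gkv_def by simp
  qed
  have below: "qj \<le> card {x\<in>K. x < a}"
  proof -
    have "{0..<int qj} \<subseteq> {x\<in>K. x < a}" using inK ab qd by auto
    then have "card {0..<int qj} \<le> card {x\<in>K. x < a}" using fin by (intro card_mono) auto
    then show ?thesis by simp
  qed
  have rr: "a + int r \<le> N k \<and> int r \<le> int qj + 1"
  proof (cases "odd (p k)")
    case True
    then have "r = qj" unfolding r_def qj_def by (auto elim!: oddE)
    moreover have "a = hi (A k)" using anchor_bounds(3)[OF mbT A k True] unfolding a_def by (metis hi.simps(1))
    ultimately show ?thesis using ab qd by simp
  next
    case False
    then have "r = qj + 1" unfolding r_def qj_def by (auto elim!: evenE)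
    moreover have "a < hi (A k)" using anchor_bounds(4)[OF mbT A k] False unfolding a_def by simp
    ultimately show ?thesis using ab qd by simp
  qed
  have above: "p k + 1 - qj \<le> card {x\<in>K. a < x}"
  proof -
    have "{N k - int r + 1..N k} \<subseteq> {x\<in>K. a < x}"
    proof
      fix x assume x: "x \<in> {N k - int r + 1..N k}"
      then have "N k - qq p k \<le> x \<and> x \<le> N k" using rr qd by auto
      then have "x \<in> K" using inK by blast
      moreover have "a < x" using x rr by auto
      ultimately show "x \<in> {x\<in>K. a < x}" by simp
    qed
    then have "card {N k - int r + 1..N k} \<le> card {x\<in>K. a < x}" using fin by (intro card_mono) auto
    then show ?thesis unfolding r_def by simp
  qed
  have qle: "qj \<le> p k + 1" unfolding qj_def by simp
  obtain v0 where v0: "is_lkv K (p k) qj a v0" using is_lkv_exists[OF fin aK below above qle] by blast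
  have q2: "qj < p k + 2" using qle by simp
  have uq: "\<And>w. is_lkv K (p k) qj a w \<Longrightarrow> w = v0" using is_lkv_unique[OF _ v0 q2] by blast
  have "is_lkv K (p k) qj a (THE v. is_lkv K (p k) qj a v)" using theI[of "is_lkv K (p k) qj a", OF v0 uq] .
  then show ?thesis unfolding lkv_def K_def qj_def a_def .
qed

lemma in_hull:
  fixes v :: "int list"
  assumes sv: "sorted_wrt (<) v" and xin: "x \<in> set v"
  shows "hd v \<le> x \<and> x \<le> last v"
proof -
  have nv: "v \<noteq> []" using xin by auto
  obtain r where r: "r < length v" "v ! r = x" using xin by (metis in_set_conv_nth)
  have "v ! 0 \<le> v ! r" using swle2[OF sv, of 0 r] r by blast
  moreover have "v ! r \<le> v ! (length v - 1)" using swle2[OF sv, of r "length v - 1"] r by auto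
  ultimately show ?thesis using nv r by (simp add: hd_conv_nth last_conv_nth)
qed

lemma overlap_sym: "overlap v w \<Longrightarrow> overlap w v"
  unfolding overlap_def by (metis max.commute)

lemma lkv_facts:
  assumes T: "T \<in> meshes d N p" and N1: "\<forall>k<d. N k \<ge> 1" and A: "A \<in> anchors d N p T" and k: "k < d"
  shows "lkv d p T k A \<noteq> []" "sorted_wrt (<) (lkv d p T k A)"
    "\<And>n. hd (lkv d p T k A) \<le> n \<Longrightarrow> n \<le> last (lkv d p T k A) \<Longrightarrow> n \<in> set (lkv d p T k A) \<longleftrightarrow> n \<in> gkv d T k A"
    "0 \<le> hd (lkv d p T k A)" "last (lkv d p T k A) \<le> N k"
proof -
  have L: "is_lkv (gkv d T k A) (p k) ((p k + 1) div 2) (lo (A k)) (lkv d p T k A)" by (rule lkv_ok[OF T N1 A k])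
  have mbT: "mb d N T" by (rule mb_meshes[OF T])
  show ne: "lkv d p T k A \<noteq> []" using L unfolding is_lkv_def by auto
  show "sorted_wrt (<) (lkv d p T k A)" using L unfolding is_lkv_def by auto
  have sub: "set (lkv d p T k A) \<subseteq> gkv d T k A" using L unfolding is_lkv_def by auto
  show "\<And>n. hd (lkv d p T k A) \<le> n \<Longrightarrow> n \<le> last (lkv d p T k A) \<Longrightarrow> n \<in> set (lkv d p T k A) \<longleftrightarrow> n \<in> gkv d T k A"
    using is_lkv_mem[OF L] sub by blast
  have "hd (lkv d p T k A) \<in> gkv d T k A" "last (lkv d p T k A) \<in> gkv d T k A" using sub ne by auto
  then show "0 \<le> hd (lkv d p T k A)" "last (lkv d p T k A) \<le> N k" using gkv_bounds[OF mbT A k] by auto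
qed

lemma card_two_fail:
  assumes "card {k. k < d \<and> P k} < d - 1"
  shows "\<exists>i j. i < d \<and> j < d \<and> i \<noteq> j \<and> \<not> P i \<and> \<not> P j"
proof (rule ccontr)
  assume H: "\<not> ?thesis"
  show False
  proof (cases "\<exists>i<d. \<not> P i")
    case False
    then have "{k. k < d \<and> P k} = {..<d}" by auto
    then show False using assms by simp
  next
    case True
    then obtain i where i: "i < d" "\<not> P i" by blast
    have "{..<d} - {i} \<subseteq> {k. k < d \<and> P k}" using H i by blast
    then have "card ({..<d} - {i}) \<le> card {k. k < d \<and> P k}" by (intro card_mono) auto
    then show False using assms i by simp
  qed
qed

lemma card_one_fail:
  assumes "d - 1 \<le> card {k. k < d \<and> P k}" "i < d" "j < d" "i \<noteq> j" "\<not> P i"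
  shows "P j"
proof (rule ccontr)
  assume "\<not> P j"
  then have "{k. k < d \<and> P k} \<subseteq> {..<d} - {i, j}" using assms by auto
  then have "card {k. k < d \<and> P k} \<le> card ({..<d} - {i, j})" by (intro card_mono) auto
  also have "\<dots> = d - 2" using assms by (simp add: card_Diff_subset)
  finally show False using assms by linarith
qed

lemma supp_hull:
  assumes "x \<in> supp d p T A" "k < d"
  shows "of_int (hd (lkv d p T k A)) \<le> x k" "x k \<le> of_int (last (lkv d p T k A))"
  using assms unfolding supp_def by auto

lemma agree_of_overlap:
  assumes T: "T \<in> meshes d N p" and N1: "\<forall>k<d. N k \<ge> 1"
    and A: "A \<in> anchors d N p T" and B: "B \<in> anchors d N p T" and k: "k < d"
    and ov: "overlap (lkv d p T k A) (lkv d p T k B)"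
    and hA: "hd (lkv d p T k A) \<le> n" "n \<le> last (lkv d p T k A)"
    and hB: "hd (lkv d p T k B) \<le> n" "n \<le> last (lkv d p T k B)"
  shows "n \<in> gkv d T k A \<longleftrightarrow> n \<in> gkv d T k B"
proof -
  note FA = lkv_facts[OF T N1 A k] and FB = lkv_facts[OF T N1 B k]
  have "n \<in> set (lkv d p T k A) \<longleftrightarrow> n \<in> set (lkv d p T k B)"
    using overlap_agree[OF ov FA(2) FB(1) hB] overlap_agree[OF overlap_sym[OF ov] FB(2) FA(1) hA] by blast
  then show ?thesis using FA(3)[OF hA] FB(3)[OF hB] by blast
qed

lemma witness_of_nonoverlap:
  assumes T: "T \<in> meshes d N p" and N1: "\<forall>k<d. N k \<ge> 1"
    and A: "A \<in> anchors d N p T" and B: "B \<in> anchors d N p T" and k: "k < d"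
    and nov: "\<not> overlap (lkv d p T k A) (lkv d p T k B)"
  shows "\<exists>n. hd (lkv d p T k A) \<le> n \<and> n \<le> last (lkv d p T k A) \<and>
             hd (lkv d p T k B) \<le> n \<and> n \<le> last (lkv d p T k B) \<and>
             (n \<in> gkv d T k A \<longleftrightarrow> n \<notin> gkv d T k B)"
proof (rule ccontr)
  assume H: "\<not> ?thesis"
  note FA = lkv_facts[OF T N1 A k] and FB = lkv_facts[OF T N1 B k]
  have ag: "n \<in> gkv d T k A \<longleftrightarrow> n \<in> gkv d T k B"
    if "hd (lkv d p T k A) \<le> n" "n \<le> last (lkv d p T k A)"
       "hd (lkv d p T k B) \<le> n" "n \<le> last (lkv d p T k B)" for n
    using H that by blast
  have "overlap (lkv d p T k A) (lkv d p T k B)"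
  proof (rule agree_overlap[OF FA(2) FB(2) FA(1) FB(1)])
    fix n assume n: "n \<in> set (lkv d p T k B)" "hd (lkv d p T k A) \<le> n" "n \<le> last (lkv d p T k A)"
    have hb: "hd (lkv d p T k B) \<le> n \<and> n \<le> last (lkv d p T k B)" using in_hull[OF FB(2) n(1)] .
    then have "n \<in> gkv d T k B" using FB(3) n(1) by blast
    then have "n \<in> gkv d T k A" using ag n hb by blast
    then show "n \<in> set (lkv d p T k A)" using FA(3) n(2,3) by blast
  next
    fix n assume n: "n \<in> set (lkv d p T k A)" "hd (lkv d p T k B) \<le> n" "n \<le> last (lkv d p T k B)"
    have ha: "hd (lkv d p T k A) \<le> n \<and> n \<le> last (lkv d p T k A)" using in_hull[OF FA(2) n(1)] .
    then have "n \<in> gkv d T k A" using FA(3) n(1) by blast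
    then have "n \<in> gkv d T k B" using ag n ha by blast
    then show "n \<in> set (lkv d p T k B)" using FB(3) n(2,3) by blast
  qed
  then show False using nov by simp
qed




lemma supp_hull_int:
  assumes "x \<in> supp d p T A" "k < d" "x k = of_int n"
  shows "hd (lkv d p T k A) \<le> n" "n \<le> last (lkv d p T k A)"
  using supp_hull[OF assms(1,2)] assms(3) by simp_all

theorem theorem6p1:
  fixes d :: nat and N :: "nat \<Rightarrow> int" and p :: "nat \<Rightarrow> nat" and T :: "ent set"
  assumes "d \<ge> 2"
    and "\<forall>k<d. N k \<ge> 1"
    and "T \<in> meshes d N p"
  shows "AAS d N p T \<longleftrightarrow> SDC d N p T"
proof
  have N1: "\<forall>k<d. N k \<ge> 1" and T: "T \<in> meshes d N p" using assms by auto
  assume aas: "AAS d N p T"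
  show "SDC d N p T" unfolding SDC_def
  proof (intro ballI impI)
    fix A1 A2 assume A1: "A1 \<in> anchors d N p T" and A2: "A2 \<in> anchors d N p T" and ne: "A1 \<noteq> A2"
    show "supp d p T A1 \<inter> supp d p T A2 = {} \<or>
      d - 1 \<le> card {k. k < d \<and> overlap (lkv d p T k A1) (lkv d p T k A2)}"
    proof (rule ccontr)
      assume H: "\<not> ?thesis"
      then obtain y where y: "y \<in> supp d p T A1" "y \<in> supp d p T A2" by blast
      from H have "card {k. k < d \<and> overlap (lkv d p T k A1) (lkv d p T k A2)} < d - 1" by simp
      then obtain i j where ij: "i < d" "j < d" "i \<noteq> j"
        "\<not> overlap (lkv d p T i A1) (lkv d p T i A2)" "\<not> overlap (lkv d p T j A1) (lkv d p T j A2)"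
        using card_two_fail[where P="\<lambda>k. overlap (lkv d p T k A1) (lkv d p T k A2)" and d=d] by blast
      obtain n where n: "hd (lkv d p T i A1) \<le> n" "n \<le> last (lkv d p T i A1)"
        "hd (lkv d p T i A2) \<le> n" "n \<le> last (lkv d p T i A2)"
        "n \<in> gkv d T i A1 \<longleftrightarrow> n \<notin> gkv d T i A2"
        using witness_of_nonoverlap[OF T N1 A1 A2 ij(1) ij(4)] by blast
      obtain m where m: "hd (lkv d p T j A1) \<le> m" "m \<le> last (lkv d p T j A1)"
        "hd (lkv d p T j A2) \<le> m" "m \<le> last (lkv d p T j A2)"
        "m \<in> gkv d T j A1 \<longleftrightarrow> m \<notin> gkv d T j A2"
        using witness_of_nonoverlap[OF T N1 A1 A2 ij(2) ij(5)] by blast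
      define x where "x = (\<lambda>k. if k = i then (of_int n :: real) else if k = j then of_int m else y k)"
      have yp: "y \<in> points d" using y unfolding supp_def by auto
      have xp: "x \<in> points d" using yp ij unfolding points_def x_def by auto
      have xi: "x i = of_int n" and xj: "x j = of_int m" using ij unfolding x_def by auto
      have xsupp: "x \<in> supp d p T A" if A: "A = A1 \<or> A = A2" for A
      proof -
        have "of_int (hd (lkv d p T k A)) \<le> x k \<and> x k \<le> of_int (last (lkv d p T k A))" if k: "k < d" for k
        proof (cases "k = i")
          case True then show ?thesis using A n xi by auto
        next
          case False
          show ?thesis
          proof (cases "k = j")
            case True then show ?thesis using A m xj by auto
          next
            case False
            then have "x k = y k" using \<open>k \<noteq> i\<close> unfolding x_def by simp
            then show ?thesis using A y supp_hull[of y d p T _ k] k by auto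
          qed
        qed
        then show ?thesis unfolding supp_def using xp by auto
      qed
      have xO: "x \<in> Omega_bar d N"
      proof -
        have "0 \<le> x k \<and> x k \<le> of_int (N k)" if k: "k < d" for k
        proof -
          have "0 \<le> hd (lkv d p T k A1)" "last (lkv d p T k A1) \<le> N k" using lkv_facts[OF T N1 A1 k] by auto
          moreover have "of_int (hd (lkv d p T k A1)) \<le> x k" "x k \<le> of_int (last (lkv d p T k A1))"
            using supp_hull[OF xsupp k] by auto
          ultimately show ?thesis by (smt (verit) of_int_le_iff of_int_0_le_iff)
        qed
        then show ?thesis unfolding Omega_bar_def using xp by auto
      qed
      have nN: "n \<in> {0..N i}"
        using lkv_facts(4,5)[OF T N1 A1 ij(1)] n(1,2) by auto
      have mN: "m \<in> {0..N j}"
        using lkv_facts(4,5)[OF T N1 A1 ij(2)] m(1,2) by auto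
      have "x \<in> ATJ d N p T i n"
      proof -
        have "x \<in> slice d N i n" unfolding slice_def using xO xi by simp
        moreover have "x \<in> (\<Union>A\<in>{A \<in> anchors d N p T. n \<in> gkv d T i A}. supp d p T A)"
          using n(5) A1 A2 xsupp by (cases "n \<in> gkv d T i A1") blast+
        moreover have "x \<in> (\<Union>A\<in>{A \<in> anchors d N p T. n \<notin> gkv d T i A}. supp d p T A)"
          using n(5) A1 A2 xsupp by (cases "n \<in> gkv d T i A1") blast+
        ultimately show ?thesis unfolding ATJ_def by blast
      qed
      moreover have "x \<in> ATJ d N p T j m"
      proof -
        have "x \<in> slice d N j m" unfolding slice_def using xO xj by simp
        moreover have "x \<in> (\<Union>A\<in>{A \<in> anchors d N p T. m \<in> gkv d T j A}. supp d p T A)"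
          using m(5) A1 A2 xsupp by (cases "m \<in> gkv d T j A1") blast+
        moreover have "x \<in> (\<Union>A\<in>{A \<in> anchors d N p T. m \<notin> gkv d T j A}. supp d p T A)"
          using m(5) A1 A2 xsupp by (cases "m \<in> gkv d T j A1") blast+
        ultimately show ?thesis unfolding ATJ_def by blast
      qed
      moreover have "ATJ d N p T i n \<inter> ATJ d N p T j m = {}"
        using aas ij(1,2,3) nN mN unfolding AAS_def by blast
      ultimately show False by blast
    qed
  qed
next
  have N1: "\<forall>k<d. N k \<ge> 1" and T: "T \<in> meshes d N p" using assms by auto
  assume sdc: "SDC d N p T"
  show "AAS d N p T" unfolding AAS_def
  proof (intro allI impI ballI)
    fix i j n m assume i: "i < d" and j: "j < d" and ij: "i \<noteq> j" and nN: "n \<in> {0..N i}" and mN: "m \<in> {0..N j}"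
    show "ATJ d N p T i n \<inter> ATJ d N p T j m = {}"
    proof (rule ccontr)
      assume "ATJ d N p T i n \<inter> ATJ d N p T j m \<noteq> {}"
      then obtain x where x1: "x \<in> ATJ d N p T i n" and x2: "x \<in> ATJ d N p T j m" by blast
      have xi: "x i = of_int n" using x1 unfolding ATJ_def slice_def by auto
      have xj: "x j = of_int m" using x2 unfolding ATJ_def slice_def by auto
      obtain A1 where A1: "A1 \<in> anchors d N p T" "n \<in> gkv d T i A1" "x \<in> supp d p T A1"
        using x1 unfolding ATJ_def by blast
      obtain A2 where A2: "A2 \<in> anchors d N p T" "n \<notin> gkv d T i A2" "x \<in> supp d p T A2"
        using x1 unfolding ATJ_def by blast
      obtain B1 where B1: "B1 \<in> anchors d N p T" "m \<in> gkv d T j B1" "x \<in> supp d p T B1"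
        using x2 unfolding ATJ_def by blast
      obtain B2 where B2: "B2 \<in> anchors d N p T" "m \<notin> gkv d T j B2" "x \<in> supp d p T B2"
        using x2 unfolding ATJ_def by blast
      have same: "m \<in> gkv d T j X \<longleftrightarrow> m \<in> gkv d T j Y"
        if X: "X \<in> anchors d N p T" "x \<in> supp d p T X" and Y: "Y \<in> anchors d N p T" "x \<in> supp d p T Y"
          and df: "\<not> (n \<in> gkv d T i X \<longleftrightarrow> n \<in> gkv d T i Y)" for X Y
      proof -
        have "X \<noteq> Y" using df by blast
        moreover have "supp d p T X \<inter> supp d p T Y \<noteq> {}" using X Y by blast
        ultimately have c: "d - 1 \<le> card {k. k < d \<and> overlap (lkv d p T k X) (lkv d p T k Y)}"
          using sdc X(1) Y(1) unfolding SDC_def by blast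
        have "\<not> overlap (lkv d p T i X) (lkv d p T i Y)"
        proof
          assume ov: "overlap (lkv d p T i X) (lkv d p T i Y)"
          have "n \<in> gkv d T i X \<longleftrightarrow> n \<in> gkv d T i Y"
            using agree_of_overlap[OF T N1 X(1) Y(1) i ov supp_hull_int[OF X(2) i xi] supp_hull_int[OF Y(2) i xi]] .
          then show False using df by blast
        qed
        then have ovj: "overlap (lkv d p T j X) (lkv d p T j Y)"
          using card_one_fail[OF c i j ij] by blast
        show ?thesis
          using agree_of_overlap[OF T N1 X(1) Y(1) j ovj supp_hull_int[OF X(2) j xj] supp_hull_int[OF Y(2) j xj]] .
      qed
      have s12: "m \<in> gkv d T j A1 \<longleftrightarrow> m \<in> gkv d T j A2"
        using same[OF A1(1,3) A2(1,3)] A1(2) A2(2) by blast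
      have s11: "\<not> (n \<in> gkv d T i B1) \<Longrightarrow> (m \<in> gkv d T j A1 \<longleftrightarrow> m \<in> gkv d T j B1)"
        using same[OF A1(1,3) B1(1,3)] A1(2) by blast
      have s12b: "\<not> (n \<in> gkv d T i B2) \<Longrightarrow> (m \<in> gkv d T j A1 \<longleftrightarrow> m \<in> gkv d T j B2)"
        using same[OF A1(1,3) B2(1,3)] A1(2) by blast
      have s21: "n \<in> gkv d T i B1 \<Longrightarrow> (m \<in> gkv d T j A2 \<longleftrightarrow> m \<in> gkv d T j B1)"
        using same[OF A2(1,3) B1(1,3)] A2(2) by blast
      have s22: "n \<in> gkv d T i B2 \<Longrightarrow> (m \<in> gkv d T j A2 \<longleftrightarrow> m \<in> gkv d T j B2)"
        using same[OF A2(1,3) B2(1,3)] A2(2) by blast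
      show False using s12 s11 s12b s21 s22 B1(2) B2(2) by blast
    qed
  qed
qed


end
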